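(* Let $A$ be a set and let $\alpha,\beta$ be quasiorders on $A$. The following are equivalent: (1) $\alpha\cap\beta=\Delta_A$ and $\alpha\cup\beta=A\times A$; (2) $\alpha\cap\beta=\Delta_A$ and $(\alpha\cap\gamma)\vee(\beta\cap\gamma)=\gamma$ for every quasiorder $\gamma$ on $A$.
   Context: A quasiorder on a set $A$ is a reflexive and transitive binary relation on $A$; $\Delta_A=\{(a,a)\mid a\in A\}$. The set $\mathrm{Quord}(A)$ of all quasiorders on $A$ is a complete lattice under inclusion; $\cap$ is intersection and $\gamma_1\vee\gamma_2$ denotes the join in this lattice, i.e. the smallest quasiorder containing $\gamma_1\cup\gamma_2$ (the transitive closure of $\gamma_1\cup\gamma_2$). *)

theory Defs
  imports Main
begin

definition quasiorder_on :: "'a set \<Rightarrow> ('a \<times> 'a) set \<Rightarrow> bool" where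
  "quasiorder_on A r \<longleftrightarrow> r \<subseteq> A \<times> A \<and> refl_on A r \<and> trans r"

definition quord_join :: "'a set \<Rightarrow> ('a \<times> 'a) set \<Rightarrow> ('a \<times> 'a) set \<Rightarrow> ('a \<times> 'a) set" where
  "quord_join A r s = \<Inter>{q. quasiorder_on A q \<and> r \<union> s \<subseteq> q}"

end

theory Submission
  imports Defs
begin

lemma join_le: "quasiorder_on A q \<Longrightarrow> r \<union> s \<subseteq> q \<Longrightarrow> quord_join A r s \<subseteq> q"
  unfolding quord_join_def by blast

lemma join_ge: "r \<union> s \<subseteq> quord_join A r s"
  unfolding quord_join_def by blast

lemma qo_Id: "quasiorder_on A (Id_on A)"
  unfolding quasiorder_on_def refl_on_def trans_def by auto

lemma qo_pt: "a \<in> A \<Longrightarrow> b \<in> A \<Longrightarrow> quasiorder_on A (Id_on A \<union> {(a,b)})"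
  unfolding quasiorder_on_def refl_on_def trans_def by auto

theorem proposition2p1:
  fixes A :: "'a set" and \<alpha> \<beta> :: "('a \<times> 'a) set"
  assumes "quasiorder_on A \<alpha>" and "quasiorder_on A \<beta>"
  shows "(\<alpha> \<inter> \<beta> = Id_on A \<and> \<alpha> \<union> \<beta> = A \<times> A) \<longleftrightarrow>
         (\<alpha> \<inter> \<beta> = Id_on A \<and>
          (\<forall>\<gamma>. quasiorder_on A \<gamma> \<longrightarrow> quord_join A (\<alpha> \<inter> \<gamma>) (\<beta> \<inter> \<gamma>) = \<gamma>))"
proof
  assume h: "\<alpha> \<inter> \<beta> = Id_on A \<and> \<alpha> \<union> \<beta> = A \<times> A"
  show "\<alpha> \<inter> \<beta> = Id_on A \<and>
          (\<forall>\<gamma>. quasiorder_on A \<gamma> \<longrightarrow> quord_join A (\<alpha> \<inter> \<gamma>) (\<beta> \<inter> \<gamma>) = \<gamma>)"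
  proof (intro conjI allI impI)
    show "\<alpha> \<inter> \<beta> = Id_on A" using h by blast
    fix \<gamma> assume g: "quasiorder_on A \<gamma>"
    have u: "(\<alpha> \<inter> \<gamma>) \<union> (\<beta> \<inter> \<gamma>) = \<gamma>" using h g unfolding quasiorder_on_def by blast
    show "quord_join A (\<alpha> \<inter> \<gamma>) (\<beta> \<inter> \<gamma>) = \<gamma>"
      using join_le[OF g, of "\<alpha> \<inter> \<gamma>" "\<beta> \<inter> \<gamma>"] join_ge[of "\<alpha> \<inter> \<gamma>" "\<beta> \<inter> \<gamma>" A] u by blast
  qed
next
  assume h: "\<alpha> \<inter> \<beta> = Id_on A \<and>
          (\<forall>\<gamma>. quasiorder_on A \<gamma> \<longrightarrow> quord_join A (\<alpha> \<inter> \<gamma>) (\<beta> \<inter> \<gamma>) = \<gamma>)"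
  have "\<alpha> \<union> \<beta> = A \<times> A"
  proof
    show "\<alpha> \<union> \<beta> \<subseteq> A \<times> A" using assms unfolding quasiorder_on_def by blast
  next
    show "A \<times> A \<subseteq> \<alpha> \<union> \<beta>"
    proof (rule ccontr)
      assume "\<not> A \<times> A \<subseteq> \<alpha> \<union> \<beta>"
      then obtain a b where ab: "a \<in> A" "b \<in> A" "(a,b) \<notin> \<alpha>" "(a,b) \<notin> \<beta>" by auto
      let ?g = "Id_on A \<union> {(a,b)}"
      have j: "quord_join A (\<alpha> \<inter> ?g) (\<beta> \<inter> ?g) = ?g" using h qo_pt[OF ab(1,2)] by blast
      have "(\<alpha> \<inter> ?g) \<union> (\<beta> \<inter> ?g) \<subseteq> Id_on A" using ab by blast
      then have "quord_join A (\<alpha> \<inter> ?g) (\<beta> \<inter> ?g) \<subseteq> Id_on A" using join_le[OF qo_Id] by blast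
      then have "a = b" using j by blast
      then show False using ab assms unfolding quasiorder_on_def refl_on_def by blast
    qed
  qed
  then show "\<alpha> \<inter> \<beta> = Id_on A \<and> \<alpha> \<union> \<beta> = A \<times> A" using h by blast
qed

end
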